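(* Let $a\ge 1$ and $b\ge 0$ be integers, and let $G_{a,b}$ be any cubic graph obtained as follows: take $a$ copies of the $2$-pole $A$ obtained from the Petersen graph by cutting an edge into two dangling edges, and $b$ copies of the $2$-pole $B$ obtained from $K_4$ by cutting an edge into two dangling edges, arrange these $a+b$ $2$-poles in a cyclic order (arbitrary), and for each consecutive pair join one dangling edge of the first to one dangling edge of the next (so each $2$-pole has one dangling edge joined to its predecessor and the other to its successor). Then $$m_3(G_{a,b}) = \frac{4a+2b}{5a+2b}.$$
   Context: For a bridgeless cubic graph $G$, $m_3(G)$ denotes the maximum, over all choices of three perfect matchings $M_1, M_2, M_3$ of $G$, of $|M_1\cup M_2\cup M_3|$, divided by $|E(G)|$. Cutting an edge $uv$ into a pair of dangling edges means deleting $uv$ and attaching one new half-edge (dangling edge) to $u$ and one to $v$; joining two dangling edges means merging them into a single edge between their end vertices. *)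

theory Defs
  imports Main Complex_Main
begin

text \<open>Graphs are given by a vertex set V and a set E of edges, each edge a 2-element set of vertices.\<close>

definition perfect_matching :: "'a set \<Rightarrow> 'a set set \<Rightarrow> 'a set set \<Rightarrow> bool" where
  "perfect_matching V E M \<longleftrightarrow> M \<subseteq> E \<and> (\<forall>v\<in>V. \<exists>!e. e \<in> M \<and> v \<in> e)"

definition m3 :: "'a set \<Rightarrow> 'a set set \<Rightarrow> real" where
  "m3 V E = real (Max {card (M1 \<union> M2 \<union> M3) | M1 M2 M3.
      perfect_matching V E M1 \<and> perfect_matching V E M2 \<and> perfect_matching V E M3})
     / real (card E)"

definition petersen_edges :: "nat set set" where
  "petersen_edges =
     {{i, (i + 1) mod 5} | i. i < 5} \<union> {{i, i + 5} | i. i < 5} \<union>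
     {{5 + i, 5 + (i + 2) mod 5} | i. i < 5}"

definition k4_edges :: "nat set set" where
  "k4_edges = {{u, v} | u v. u < 4 \<and> v < 4 \<and> u \<noteq> v}"

text \<open>2-pole: Petersen (t = True) or K4 (t = False) with edge {0,1} cut; dangling edges at 0 and 1.\<close>
definition pole_verts :: "bool \<Rightarrow> nat set" where
  "pole_verts t = {..<(if t then 10 else 4)}"

definition pole_edges :: "bool \<Rightarrow> nat set set" where
  "pole_edges t = (if t then petersen_edges else k4_edges) - {{0, 1}}"

text \<open>Which dangling end of block i is joined to the predecessor (in) / successor (out);
  fl i chooses between the two possibilities.\<close>
definition pole_in :: "(nat \<Rightarrow> bool) \<Rightarrow> nat \<Rightarrow> nat" where
  "pole_in fl i = (if fl i then 1 else 0)"

definition pole_out :: "(nat \<Rightarrow> bool) \<Rightarrow> nat \<Rightarrow> nat" where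
  "pole_out fl i = (if fl i then 0 else 1)"

text \<open>The ring G built from the cyclic sequence ts of 2-poles (True = Petersen pole A,
  False = K4 pole B); vertex (i, v) is local vertex v of block i.\<close>
definition ring_verts :: "bool list \<Rightarrow> (nat \<times> nat) set" where
  "ring_verts ts = {(i, v) | i v. i < length ts \<and> v \<in> pole_verts (ts ! i)}"

definition ring_edges :: "bool list \<Rightarrow> (nat \<Rightarrow> bool) \<Rightarrow> (nat \<times> nat) set set" where
  "ring_edges ts fl =
     {{(i, u), (i, v)} | i u v. i < length ts \<and> {u, v} \<in> pole_edges (ts ! i)} \<union>
     {{(i, pole_out fl i), (Suc i mod length ts, pole_in fl (Suc i mod length ts))} | i.
        i < length ts}"

end

theory Submission
  imports Defs
begin


lemma five_set: "{f i | i. i < (5::nat)} = {f 0, f 1, f 2, f 3, f 4}"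
proof -
  have "{f i | i. i < (5::nat)} = f ` {..<5}" by auto
  also have "{..<5::nat} = {0,1,2,3,4}" by (auto simp: lessThan_nat_numeral)
  finally show ?thesis by simp
qed

lemma petersen_explicit: "petersen_edges = {{0,1},{1,2},{2,3},{3,4},{0,4},{0,5},{1,6},{2,7},{3,8},{4,9},{5,7},{6,8},{7,9},{5,8},{6,9}}"
  unfolding petersen_edges_def five_set by (simp add: insert_commute numeral_2_eq_2[symmetric])

lemma k4_explicit: "k4_edges = {{0,1},{0,2},{0,3},{1,2},{1,3},{2,3}}"
proof -
  have "k4_edges = (\<lambda>(u,v). {u,v}) ` {(u,v). u < 4 \<and> v < (4::nat) \<and> u \<noteq> v}"
    unfolding k4_edges_def by auto
  also have "{(u,v). u < 4 \<and> v < (4::nat) \<and> u \<noteq> v} = {(0,1),(0,2),(0,3),(1,0),(1,2),(1,3),(2,0),(2,1),(2,3),(3,0),(3,1),(3,2)}"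
    by (auto simp: less_Suc_eq numeral_eq_Suc)
  finally show ?thesis by (simp add: insert_commute numeral_2_eq_2[symmetric])
qed

definition PL :: "bool \<Rightarrow> nat set list" where
 "PL t = (if t then [{1,2},{2,3},{3,4},{0,4},{0,5},{1,6},{2,7},{3,8},{4,9},{5,7},{6,8},{7,9},{5,8},{6,9}]
          else [{0,2},{0,3},{1,2},{1,3},{2,3}])"

lemma PL_not01: "{0,1} \<notin> set (PL t)"
  unfolding PL_def by (auto simp: doubleton_eq_iff)

lemma set_PL: "set (PL t) = pole_edges t"
proof -
  have "(if t then petersen_edges else k4_edges) = insert {0,1} (set (PL t))"
    unfolding PL_def petersen_explicit k4_explicit by (simp add: insert_commute)
  then show ?thesis unfolding pole_edges_def using PL_not01 by simp
qed

lemma distinct_PL: "distinct (PL t)"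
  unfolding PL_def by (auto simp: doubleton_eq_iff)

lemma PL_pair: "e \<in> set (PL t) \<Longrightarrow> \<exists>u v. e = {u, v}"
  unfolding PL_def by (auto split: if_splits)

lemma PL_ne: "e \<in> set (PL t) \<Longrightarrow> e \<noteq> {}"
  unfolding PL_def by (auto split: if_splits)


definition emb :: "nat \<Rightarrow> nat set \<Rightarrow> (nat \<times> nat) set" where
  "emb i e = Pair i ` e"

definition oe :: "bool list \<Rightarrow> (nat \<Rightarrow> bool) \<Rightarrow> nat \<Rightarrow> (nat \<times> nat) set" where
  "oe ts fl i = {(i, pole_out fl i), (Suc i mod length ts, pole_in fl (Suc i mod length ts))}"

definition ext :: "bool list \<Rightarrow> (nat \<Rightarrow> bool) \<Rightarrow> nat \<Rightarrow> nat \<Rightarrow> (nat \<times> nat) set" where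
  "ext ts fl i v = (if v = pole_out fl i then oe ts fl i else oe ts fl ((i + length ts - 1) mod length ts))"

definition cands :: "bool list \<Rightarrow> (nat \<Rightarrow> bool) \<Rightarrow> nat \<Rightarrow> nat \<Rightarrow> (nat \<times> nat) set list" where
  "cands ts fl i v = (if v < 2 then [ext ts fl i v] else []) @ map (emb i) (filter (\<lambda>e. v \<in> e) (PL (ts ! i)))"

definition sl :: "bool list \<Rightarrow> (nat \<Rightarrow> bool) \<Rightarrow> nat \<Rightarrow> (nat \<times> nat) set list" where
  "sl ts fl i = oe ts fl i # map (emb i) (PL (ts ! i))"

lemma pole_out_lt: "pole_out fl i < 2" and pole_in_lt: "pole_in fl i < 2"
  and in_ne_out: "pole_in fl i \<noteq> pole_out fl i"
  and v_in: "v < 2 \<Longrightarrow> v \<noteq> pole_out fl i \<Longrightarrow> v = pole_in fl i"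
  unfolding pole_out_def pole_in_def by auto

lemma emb_inj: "emb i e = emb j e' \<Longrightarrow> e \<noteq> {} \<Longrightarrow> i = j \<and> e = e'"
  unfolding emb_def by auto

lemma emb_inj_on: "inj_on (emb i) A"
  unfolding emb_def inj_on_def by auto

lemma mod_pred_suc: "i < n \<Longrightarrow> Suc ((i + n - 1) mod n) mod n = i"
proof (cases i)
  case 0
  assume "i < n" then show ?thesis using 0 by (cases n) auto
next
  case (Suc k)
  assume "i < n"
  then have "(i + n - 1) mod n = k" using Suc by (simp add: mod_if)
  then show ?thesis using Suc \<open>i < n\<close> by simp
qed

lemma mod_suc_pred: "j < n \<Longrightarrow> (Suc j mod n + n - 1) mod n = j"
proof (cases "Suc j < n")
  case True
  assume "j < n" then show ?thesis using True by (simp add: mod_if)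
next
  case False
  assume "j < n" then have "Suc j = n" using False by simp
  then show ?thesis by simp
qed

lemma oe_not_emb:
  assumes "e \<in> set (PL t)" shows "oe ts fl j \<noteq> emb i e"
proof
  assume eq: "oe ts fl j = emb i e"
  have "(j, pole_out fl j) \<in> emb i e" using eq unfolding oe_def by auto
  then have ji: "j = i" unfolding emb_def by auto
  have "(Suc j mod length ts, pole_in fl (Suc j mod length ts)) \<in> emb i e" using eq unfolding oe_def by auto
  then have "Suc j mod length ts = i" unfolding emb_def by auto
  then have "oe ts fl j = emb i {pole_out fl i, pole_in fl i}" using ji unfolding oe_def emb_def by auto
  then have "e = {pole_out fl i, pole_in fl i}" using eq emb_inj by (metis insert_not_empty)
  moreover have "{pole_out fl i, pole_in fl i} = {0,1}" unfolding pole_out_def pole_in_def by auto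
  ultimately show False using assms PL_not01 by simp
qed

lemma oe_inj:
  assumes "i < length ts" "j < length ts" "oe ts fl i = oe ts fl j" shows "i = j"
proof -
  have "(i, pole_out fl i) \<in> oe ts fl j" using assms(3) unfolding oe_def by auto
  then have "i = j \<or> (i = Suc j mod length ts \<and> pole_out fl i = pole_in fl i)"
    unfolding oe_def by auto
  then show ?thesis using in_ne_out by metis
qed

lemma set_sl: "set (sl ts fl i) = insert (oe ts fl i) (emb i ` set (PL (ts ! i)))"
  unfolding sl_def by simp

lemma ring_edges_eq: "ring_edges ts fl = (\<Union>i<length ts. set (sl ts fl i))"
proof -
  have A: "{{(i, u), (i, v)} | i u v. i < length ts \<and> {u, v} \<in> pole_edges (ts ! i)}
      = (\<Union>i<length ts. emb i ` set (PL (ts ! i)))"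
  proof (intro equalityI subsetI)
    fix x assume "x \<in> {{(i, u), (i, v)} | i u v. i < length ts \<and> {u, v} \<in> pole_edges (ts ! i)}"
    then obtain i u v where "x = {(i, u), (i, v)}" "i < length ts" "{u, v} \<in> set (PL (ts ! i))"
      using set_PL by auto
    moreover have "x = emb i {u,v}" using \<open>x = _\<close> unfolding emb_def by simp
    ultimately show "x \<in> (\<Union>i<length ts. emb i ` set (PL (ts ! i)))" by auto
  next
    fix x assume "x \<in> (\<Union>i<length ts. emb i ` set (PL (ts ! i)))"
    then obtain i e where "i < length ts" "e \<in> set (PL (ts ! i))" "x = emb i e" by auto
    moreover obtain u v where "e = {u,v}" using PL_pair[OF \<open>e \<in> _\<close>] by blast
    ultimately show "x \<in> {{(i, u), (i, v)} | i u v. i < length ts \<and> {u, v} \<in> pole_edges (ts ! i)}"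
      using set_PL unfolding emb_def by auto
  qed
  have B: "{{(i, pole_out fl i), (Suc i mod length ts, pole_in fl (Suc i mod length ts))} | i. i < length ts}
     = oe ts fl ` {..<length ts}" unfolding oe_def by auto
  show ?thesis unfolding ring_edges_def A B set_sl by auto
qed

lemma distinct_sl: "distinct (sl ts fl i)"
  unfolding sl_def using oe_not_emb distinct_PL
  by (auto simp: distinct_map intro: inj_on_subset[OF emb_inj_on])

lemma disjoint_sl:
  assumes "i < length ts" "j < length ts" "i \<noteq> j"
  shows "set (sl ts fl i) \<inter> set (sl ts fl j) = {}"
proof -
  have "x \<notin> set (sl ts fl j)" if xin: "x \<in> set (sl ts fl i)" for x
  proof -
    consider "x = oe ts fl i" | e where "e \<in> set (PL (ts ! i))" "x = emb i e"
      using xin unfolding set_sl by auto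
    then show ?thesis
    proof cases
      case 1 then show ?thesis using assms oe_inj oe_not_emb unfolding set_sl by (auto; metis)
    next
      case 2 then show ?thesis using assms oe_not_emb PL_ne emb_inj unfolding set_sl by (auto; metis)
    qed
  qed
  then show ?thesis by auto
qed



fun exactly_one :: "bool list \<Rightarrow> bool" where
  "exactly_one [] = False"
| "exactly_one (x # xs) = ((x \<and> (\<forall>y\<in>set xs. \<not> y)) \<or> (\<not> x \<and> exactly_one xs))"

lemma exactly_one_iff: "distinct l \<Longrightarrow> exactly_one (map P l) \<longleftrightarrow> (\<exists>!x. x \<in> set l \<and> P x)"
  by (induction l) auto

lemma ext_oe: "i < length ts \<Longrightarrow> \<exists>k<length ts. ext ts fl i v = oe ts fl k"
proof -
  assume "i < length ts"
  then have "(i + length ts - 1) mod length ts < length ts" by (intro mod_less_divisor) auto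
  then show ?thesis unfolding ext_def using \<open>i < length ts\<close> by auto
qed

lemma ext_mem: assumes "i < length ts" "v < 2" shows "(i, v) \<in> ext ts fl i v"
proof (cases "v = pole_out fl i")
  case True then show ?thesis unfolding ext_def oe_def by simp
next
  case False
  then have "v = pole_in fl i" using v_in assms by blast
  then show ?thesis using False mod_pred_suc[OF assms(1)] unfolding ext_def oe_def by simp
qed

lemma cands_eq:
  assumes "i < length ts"
  shows "{e \<in> ring_edges ts fl. (i, v) \<in> e} = set (cands ts fl i v)"
proof (intro equalityI subsetI)
  fix e assume "e \<in> {e \<in> ring_edges ts fl. (i, v) \<in> e}"
  then obtain j where j: "j < length ts" "e \<in> set (sl ts fl j)" and iv: "(i, v) \<in> e"
    unfolding ring_edges_eq by auto
  from j(2) consider "e = oe ts fl j" | e' where "e' \<in> set (PL (ts ! j))" "e = emb j e'"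
    unfolding set_sl by auto
  then show "e \<in> set (cands ts fl i v)"
  proof cases
    case 1
    then have "(i = j \<and> v = pole_out fl j) \<or> (i = Suc j mod length ts \<and> v = pole_in fl i)"
      using iv unfolding oe_def by auto
    then show ?thesis
    proof
      assume "i = j \<and> v = pole_out fl j"
      then show ?thesis using 1 pole_out_lt unfolding cands_def ext_def by auto
    next
      assume h: "i = Suc j mod length ts \<and> v = pole_in fl i"
      then have "v \<noteq> pole_out fl i" using in_ne_out by metis
      then have "ext ts fl i v = oe ts fl j" using h mod_suc_pred[OF j(1)] unfolding ext_def by simp
      then show ?thesis using 1 h pole_in_lt unfolding cands_def by auto
    qed
  next
    case 2
    then show ?thesis using iv unfolding cands_def emb_def by auto
  qed
next
  fix e assume "e \<in> set (cands ts fl i v)"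
  then consider "v < 2" "e = ext ts fl i v" | e' where "e' \<in> set (PL (ts ! i))" "v \<in> e'" "e = emb i e'"
    unfolding cands_def by (auto split: if_splits)
  then show "e \<in> {e \<in> ring_edges ts fl. (i, v) \<in> e}"
  proof cases
    case 1
    then show ?thesis using ext_oe[OF assms] ext_mem[OF assms] unfolding ring_edges_eq set_sl
      by (metis (no_types, lifting) UN_iff insertCI lessThan_iff mem_Collect_eq)
  next
    case 2
    then show ?thesis using assms unfolding ring_edges_eq set_sl emb_def by auto
  qed
qed

lemma distinct_cands: "distinct (cands ts fl i v)"
proof -
  have "ext ts fl i v \<notin> emb i ` set (PL (ts ! i))"
    using oe_not_emb unfolding ext_def by auto
  then show ?thesis unfolding cands_def using distinct_PL
    by (auto simp: distinct_map intro: inj_on_subset[OF emb_inj_on])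
qed

lemma PM_iff:
  assumes "M \<subseteq> ring_edges ts fl"
  shows "perfect_matching (ring_verts ts) (ring_edges ts fl) M \<longleftrightarrow>
     (\<forall>i<length ts. \<forall>v\<in>pole_verts (ts ! i). exactly_one (map (\<lambda>e. e \<in> M) (cands ts fl i v)))"
proof -
  have "(\<exists>!e. e \<in> M \<and> (i, v) \<in> e) \<longleftrightarrow> exactly_one (map (\<lambda>e. e \<in> M) (cands ts fl i v))"
    if "i < length ts" for i v
  proof -
    have "(\<exists>!e. e \<in> M \<and> (i, v) \<in> e) \<longleftrightarrow> (\<exists>!e. e \<in> set (cands ts fl i v) \<and> e \<in> M)"
      using cands_eq[OF that, of fl v] assms by blast
    then show ?thesis using exactly_one_iff[OF distinct_cands] by simp
  qed
  then show ?thesis using assms unfolding perfect_matching_def ring_verts_def by auto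
qed



definition PMs :: "bool list set" where "PMs =
    {[True,False,True,False,False,False,False,False,False,True,True,True,False,False,False],
     [True,False,False,True,False,False,False,True,False,False,False,False,False,True,True],
     [False,True,False,True,False,True,False,False,False,False,False,True,True,False,False],
     [False,True,False,False,True,False,False,False,True,False,True,False,False,False,True],
     [False,False,True,False,True,False,True,False,False,False,False,False,True,True,False],
     [False,False,False,False,False,True,True,True,True,True,False,False,False,False,False]}"

definition cnt3 :: "bool list \<Rightarrow> bool list \<Rightarrow> bool list \<Rightarrow> nat" where
  "cnt3 u v w = length (filter id (map (\<lambda>((a,b),c). a \<or> b \<or> c) (zip (zip u v) w)))"

lemma pm_cnt: "u \<in> PMs \<Longrightarrow> v \<in> PMs \<Longrightarrow> w \<in> PMs \<Longrightarrow> cnt3 u v w \<le> 12"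
proof -
  have "\<forall>u\<in>PMs. \<forall>v\<in>PMs. \<forall>w\<in>PMs. cnt3 u v w \<le> 12"
    unfolding PMs_def cnt3_def by simp
  then show "u \<in> PMs \<Longrightarrow> v \<in> PMs \<Longrightarrow> w \<in> PMs \<Longrightarrow> cnt3 u v w \<le> 12" by blast
qed

lemma cnt3_map: "cnt3 (a # map f l) (b # map g l) (c # map h l) = of_bool (a \<or> b \<or> c) + length (filter (\<lambda>e. f e \<or> g e \<or> h e) l)"
proof -
  have "length (filter id (map (\<lambda>((a,b),c). a \<or> b \<or> c) (zip (zip (map f l) (map g l)) (map h l))))
      = length (filter (\<lambda>e. f e \<or> g e \<or> h e) l)" by (induction l) auto
  then show ?thesis unfolding cnt3_def by simp
qed

lemma pet_sat:
  fixes \<beta> :: "nat set \<Rightarrow> bool" and X :: "nat \<Rightarrow> bool"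
  assumes "\<forall>v<10. exactly_one ((if v < 2 then [X v] else []) @ map \<beta> (filter (\<lambda>e. v \<in> e) (PL True)))"
  shows "X 0 = X 1 \<and> X 0 # map \<beta> (PL True) \<in> PMs"
proof -
  have h: "exactly_one ((if v < 2 then [X v] else []) @ map \<beta> (filter (\<lambda>e. v \<in> e) (PL True)))"
    if "v < 10" for v using assms that by blast
  note h0 = h[of 0] and h1 = h[of 1] and h2 = h[of 2] and h3 = h[of 3] and h4 = h[of 4]
    and h5 = h[of 5] and h6 = h[of 6] and h7 = h[of 7] and h8 = h[of 8] and h9 = h[of 9]
  show ?thesis using h0 h1 h2 h3 h4 h5 h6 h7 h8 h9 unfolding PMs_def PL_def by simp argo
qed

definition vecM :: "bool list \<Rightarrow> (nat \<Rightarrow> bool) \<Rightarrow> nat \<Rightarrow> (nat \<times> nat) set set \<Rightarrow> bool list" where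
  "vecM ts fl i M = (ext ts fl i 0 \<in> M) # map (\<lambda>e. emb i e \<in> M) (PL True)"

lemma map_cands: "map (\<lambda>e. e \<in> M) (cands ts fl i v) = (if v < 2 then [(\<lambda>v. ext ts fl i v \<in> M) v] else [])
   @ map (\<lambda>e. emb i e \<in> M) (filter (\<lambda>e. v \<in> e) (PL (ts ! i)))"
  by (simp add: cands_def comp_def)

lemma pole_verts_True: "pole_verts True = {..<10}" unfolding pole_verts_def by simp

lemma pet_block:
  assumes pm: "perfect_matching (ring_verts ts) (ring_edges ts fl) M"
    and i: "i < length ts" and t: "ts ! i"
  shows "vecM ts fl i M \<in> PMs \<and> (ext ts fl i 0 \<in> M \<longleftrightarrow> ext ts fl i 1 \<in> M)"
proof -
  have sub: "M \<subseteq> ring_edges ts fl" using pm unfolding perfect_matching_def by blast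
  have "\<forall>v<10. exactly_one (map (\<lambda>e. e \<in> M) (cands ts fl i v))"
  proof (intro allI impI)
    fix v :: nat assume "v < 10"
    moreover have "pole_verts (ts ! i) = {..<10}" using t pole_verts_True by simp
    ultimately show "exactly_one (map (\<lambda>e. e \<in> M) (cands ts fl i v))"
      using pm i unfolding PM_iff[OF sub] by auto
  qed
  then have "\<forall>v<10. exactly_one ((if v < 2 then [(\<lambda>v. ext ts fl i v \<in> M) v] else [])
      @ map (\<lambda>e. emb i e \<in> M) (filter (\<lambda>e. v \<in> e) (PL True)))"
  proof -
    have tt: "ts ! i = True" using t by simp
    show ?thesis using \<open>\<forall>v<10. _\<close> unfolding map_cands tt .
  qed
  from pet_sat[OF this] show ?thesis unfolding vecM_def by blast
qed

lemma count_sl: "length (filter (\<lambda>e. e \<in> U) (sl ts fl i)) =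
   of_bool (oe ts fl i \<in> U) + length (filter (\<lambda>e. emb i e \<in> U) (PL (ts ! i)))"
  unfolding sl_def by (simp add: filter_map comp_def)

lemma oe_ext: "oe ts fl i = ext ts fl i (pole_out fl i)" unfolding ext_def by simp

lemma pet_count:
  assumes "perfect_matching (ring_verts ts) (ring_edges ts fl) M1"
    "perfect_matching (ring_verts ts) (ring_edges ts fl) M2"
    "perfect_matching (ring_verts ts) (ring_edges ts fl) M3"
    and i: "i < length ts" and t: "ts ! i"
  shows "length (filter (\<lambda>e. e \<in> M1 \<union> M2 \<union> M3) (sl ts fl i)) \<le> 12"
proof -
  note b1 = pet_block[OF assms(1) i t] and b2 = pet_block[OF assms(2) i t] and b3 = pet_block[OF assms(3) i t]
  have o: "oe ts fl i \<in> M \<longleftrightarrow> ext ts fl i 0 \<in> M" if "ext ts fl i 0 \<in> M \<longleftrightarrow> ext ts fl i 1 \<in> M" for M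
  proof -
    have "pole_out fl i = 0 \<or> pole_out fl i = 1" unfolding pole_out_def by auto
    then show ?thesis using that unfolding oe_ext by auto
  qed
  have "length (filter (\<lambda>e. e \<in> M1 \<union> M2 \<union> M3) (sl ts fl i)) = cnt3 (vecM ts fl i M1) (vecM ts fl i M2) (vecM ts fl i M3)"
    unfolding count_sl vecM_def cnt3_map using t o b1 b2 b3 by simp
  also have "\<dots> \<le> 12" using pm_cnt b1 b2 b3 by blast
  finally show ?thesis .
qed



lemma finite_E: "finite (ring_edges ts fl)"
  unfolding ring_edges_eq by auto

lemma card_sub:
  assumes "U \<subseteq> ring_edges ts fl"
  shows "card U = (\<Sum>i<length ts. length (filter (\<lambda>e. e \<in> U) (sl ts fl i)))"
proof -
  have "U = (\<Union>i<length ts. U \<inter> set (sl ts fl i))" using assms unfolding ring_edges_eq by auto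
  moreover have "card (\<Union>i<length ts. U \<inter> set (sl ts fl i)) = (\<Sum>i<length ts. card (U \<inter> set (sl ts fl i)))"
  proof (rule card_UN_disjoint)
    show "\<forall>i\<in>{..<length ts}. \<forall>j\<in>{..<length ts}. i \<noteq> j \<longrightarrow>
        U \<inter> set (sl ts fl i) \<inter> (U \<inter> set (sl ts fl j)) = {}"
      using disjoint_sl[of _ ts _ fl] by blast
  qed auto
  ultimately have "card U = (\<Sum>i<length ts. card (U \<inter> set (sl ts fl i)))" by simp
  also have "\<dots> = (\<Sum>i<length ts. length (filter (\<lambda>e. e \<in> U) (sl ts fl i)))"
  proof (rule sum.cong)
    fix i
    have "U \<inter> set (sl ts fl i) = set (filter (\<lambda>e. e \<in> U) (sl ts fl i))" by auto
    then show "card (U \<inter> set (sl ts fl i)) = length (filter (\<lambda>e. e \<in> U) (sl ts fl i))"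
      using distinct_card[OF distinct_filter[OF distinct_sl]] by metis
  qed simp
  finally show ?thesis .
qed

lemma sum_if: "(\<Sum>i<length ts. if ts ! i then p else q) = p * length (filter id ts) + q * length (filter Not ts)"
  by (induction ts) (simp_all add: sum.lessThan_Suc_shift del: sum.lessThan_Suc)

lemma card_E: "card (ring_edges ts fl) = 15 * length (filter id ts) + 6 * length (filter Not ts)"
proof -
  have "card (ring_edges ts fl) = (\<Sum>i<length ts. length (filter (\<lambda>e. e \<in> ring_edges ts fl) (sl ts fl i)))"
    using card_sub by blast
  also have "\<dots> = (\<Sum>i<length ts. if ts ! i then 15 else 6)"
  proof (rule sum.cong)
    fix i assume "i \<in> {..<length ts}"
    then have "filter (\<lambda>e. e \<in> ring_edges ts fl) (sl ts fl i) = sl ts fl i"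
      unfolding ring_edges_eq by (auto simp: filter_id_conv)
    then show "length (filter (\<lambda>e. e \<in> ring_edges ts fl) (sl ts fl i)) = (if ts ! i then 15 else 6)"
      unfolding sl_def PL_def by simp
  qed simp
  finally show ?thesis using sum_if by simp
qed

lemma upper:
  assumes "perfect_matching (ring_verts ts) (ring_edges ts fl) M1"
    "perfect_matching (ring_verts ts) (ring_edges ts fl) M2"
    "perfect_matching (ring_verts ts) (ring_edges ts fl) M3"
  shows "card (M1 \<union> M2 \<union> M3) \<le> 12 * length (filter id ts) + 6 * length (filter Not ts)"
proof -
  have sub: "M1 \<union> M2 \<union> M3 \<subseteq> ring_edges ts fl" using assms unfolding perfect_matching_def by blast
  have "card (M1 \<union> M2 \<union> M3) = (\<Sum>i<length ts. length (filter (\<lambda>e. e \<in> M1 \<union> M2 \<union> M3) (sl ts fl i)))"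
    using card_sub[OF sub] .
  also have "\<dots> \<le> (\<Sum>i<length ts. if ts ! i then 12 else 6)"
  proof (rule sum_mono)
    fix i assume "i \<in> {..<length ts}"
    then have i: "i < length ts" by simp
    show "length (filter (\<lambda>e. e \<in> M1 \<union> M2 \<union> M3) (sl ts fl i)) \<le> (if ts ! i then 12 else 6)"
    proof (cases "ts ! i")
      case True then show ?thesis using pet_count[OF assms i] by simp
    next
      case False
      have "length (filter (\<lambda>e. e \<in> M1 \<union> M2 \<union> M3) (sl ts fl i)) \<le> length (sl ts fl i)" by simp
      also have "\<dots> = 6" using False unfolding sl_def PL_def by simp
      finally show ?thesis using False by simp
    qed
  qed
  finally show ?thesis using sum_if by simp
qed



definition Q :: "nat \<Rightarrow> bool \<Rightarrow> nat set set" where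
  "Q j t = (if t then (if j = 1 then {{2,3},{4,9},{5,7},{6,8}}
                     else if j = 2 then {{1,2},{3,4},{0,5},{6,8},{7,9}}
                     else {{2,3},{0,4},{1,6},{7,9},{5,8}})
            else (if j = 1 then {{2,3}} else if j = 2 then {{0,2},{1,3}} else {{0,3},{1,2}}))"

lemma Q_sub: "Q j t \<subseteq> set (PL t)"
  unfolding Q_def PL_def by auto

definition MM :: "bool list \<Rightarrow> (nat \<Rightarrow> bool) \<Rightarrow> nat \<Rightarrow> (nat \<times> nat) set set" where
  "MM ts fl j = (\<Union>i<length ts. emb i ` Q j (ts ! i)) \<union> (if j = 1 then oe ts fl ` {..<length ts} else {})"

lemma MM_cases:
  assumes "x \<in> MM ts fl j"
  obtains i e where "i < length ts" "e \<in> Q j (ts ! i)" "x = emb i e"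
    | k where "j = 1" "k < length ts" "x = oe ts fl k"
  using assms unfolding MM_def by (auto split: if_splits)

lemma MM_sub: "MM ts fl j \<subseteq> ring_edges ts fl"
proof
  fix x assume "x \<in> MM ts fl j"
  then show "x \<in> ring_edges ts fl"
  proof (cases rule: MM_cases)
    case (1 i e)
    then have "x \<in> set (sl ts fl i)" using Q_sub unfolding set_sl by auto
    then show ?thesis using 1 unfolding ring_edges_eq by auto
  next
    case (2 k)
    then have "x \<in> set (sl ts fl k)" unfolding set_sl by auto
    then show ?thesis using 2 unfolding ring_edges_eq by auto
  qed
qed

lemma memb_emb:
  assumes "e \<in> set (PL (ts ! i))"
  shows "emb i e \<in> MM ts fl j \<longleftrightarrow> e \<in> Q j (ts ! i) \<and> i < length ts"
proof
  assume "emb i e \<in> MM ts fl j"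
  then consider i' e' where "i' < length ts" "e' \<in> Q j (ts ! i')" "emb i e = emb i' e'"
    | k where "oe ts fl k = emb i e"
    unfolding MM_def by (auto split: if_splits)
  then show "e \<in> Q j (ts ! i) \<and> i < length ts"
  proof cases
    case 1 then show ?thesis using emb_inj PL_ne[OF assms] by metis
  next
    case 2 then show ?thesis using oe_not_emb[OF assms] by metis
  qed
qed (auto simp: MM_def)

lemma memb_oe:
  assumes "k < length ts" shows "oe ts fl k \<in> MM ts fl j \<longleftrightarrow> j = 1"
proof
  assume "oe ts fl k \<in> MM ts fl j"
  then show "j = 1"
  proof (cases rule: MM_cases)
    case (1 i e)
    then show ?thesis using oe_not_emb Q_sub by blast
  qed
qed (use assms in \<open>auto simp: MM_def\<close>)

lemma memb_ext:
  assumes "i < length ts" shows "ext ts fl i v \<in> MM ts fl j \<longleftrightarrow> j = 1"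
  using ext_oe[OF assms] memb_oe by metis

lemma lt10: "{..<10::nat} = {0,1,2,3,4,5,6,7,8,9}" by (auto simp: lessThan_nat_numeral)
lemma lt4: "{..<4::nat} = {0,1,2,3}" by (auto simp: lessThan_nat_numeral)

lemma loc_ok:
  assumes "v \<in> pole_verts t" "j \<in> {1,2,3}"
  shows "exactly_one ((if v < 2 then [j = 1] else []) @ map (\<lambda>e. e \<in> Q j t) (filter (\<lambda>e. v \<in> e) (PL t)))"
proof -
  have T1: "\<forall>v\<in>{..<10}. exactly_one ((if v < 2 then [(1::nat) = 1] else []) @ map (\<lambda>e. e \<in> Q 1 True) (filter (\<lambda>e. v \<in> e) (PL True)))"
    unfolding Q_def PL_def lt10 by (simp add: doubleton_eq_iff)
  have T2: "\<forall>v\<in>{..<10}. exactly_one ((if v < 2 then [(2::nat) = 1] else []) @ map (\<lambda>e. e \<in> Q 2 True) (filter (\<lambda>e. v \<in> e) (PL True)))"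
    unfolding Q_def PL_def lt10 by (simp add: doubleton_eq_iff)
  have T3: "\<forall>v\<in>{..<10}. exactly_one ((if v < 2 then [(3::nat) = 1] else []) @ map (\<lambda>e. e \<in> Q 3 True) (filter (\<lambda>e. v \<in> e) (PL True)))"
    unfolding Q_def PL_def lt10 by (simp add: doubleton_eq_iff)
  have F1: "\<forall>v\<in>{..<4}. exactly_one ((if v < 2 then [(1::nat) = 1] else []) @ map (\<lambda>e. e \<in> Q 1 False) (filter (\<lambda>e. v \<in> e) (PL False)))"
    unfolding Q_def PL_def lt4 by (simp add: doubleton_eq_iff)
  have F2: "\<forall>v\<in>{..<4}. exactly_one ((if v < 2 then [(2::nat) = 1] else []) @ map (\<lambda>e. e \<in> Q 2 False) (filter (\<lambda>e. v \<in> e) (PL False)))"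
    unfolding Q_def PL_def lt4 by (simp add: doubleton_eq_iff)
  have F3: "\<forall>v\<in>{..<4}. exactly_one ((if v < 2 then [(3::nat) = 1] else []) @ map (\<lambda>e. e \<in> Q 3 False) (filter (\<lambda>e. v \<in> e) (PL False)))"
    unfolding Q_def PL_def lt4 by (simp add: doubleton_eq_iff)
  have pv: "pole_verts t = (if t then {..<10} else {..<4})" unfolding pole_verts_def by simp
  from assms(2) consider "j = 1" | "j = 2" | "j = 3" by blast
  then show ?thesis
  proof cases
    case 1
    show ?thesis
    proof (cases t)
      case True
      then have "v \<in> {..<10}" using assms(1) unfolding pv by simp
      from bspec[OF T1 this] show ?thesis using True 1 by (simp only: simp_thms)
    next
      case False
      then have "v \<in> {..<4}" using assms(1) unfolding pv by simp
      from bspec[OF F1 this] show ?thesis using False 1 by (simp only: simp_thms)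
    qed
  next
    case 2
    show ?thesis
    proof (cases t)
      case True
      then have "v \<in> {..<10}" using assms(1) unfolding pv by simp
      from bspec[OF T2 this] show ?thesis using True 2 by (simp only: simp_thms)
    next
      case False
      then have "v \<in> {..<4}" using assms(1) unfolding pv by simp
      from bspec[OF F2 this] show ?thesis using False 2 by (simp only: simp_thms)
    qed
  next
    case 3
    show ?thesis
    proof (cases t)
      case True
      then have "v \<in> {..<10}" using assms(1) unfolding pv by simp
      from bspec[OF T3 this] show ?thesis using True 3 by (simp only: simp_thms)
    next
      case False
      then have "v \<in> {..<4}" using assms(1) unfolding pv by simp
      from bspec[OF F3 this] show ?thesis using False 3 by (simp only: simp_thms)
    qed
  qed
qed

lemma MM_pm:
  assumes "j \<in> {1,2,3}"
  shows "perfect_matching (ring_verts ts) (ring_edges ts fl) (MM ts fl j)"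
  unfolding PM_iff[OF MM_sub]
proof (intro allI impI ballI)
  fix i v assume i: "i < length ts" and v: "v \<in> pole_verts (ts ! i)"
  have "map (\<lambda>e. e \<in> MM ts fl j) (cands ts fl i v) =
     (if v < 2 then [j = 1] else []) @ map (\<lambda>e. e \<in> Q j (ts ! i)) (filter (\<lambda>e. v \<in> e) (PL (ts ! i)))"
  proof -
    have "map (\<lambda>e. emb i e \<in> MM ts fl j) (filter (\<lambda>e. v \<in> e) (PL (ts ! i)))
       = map (\<lambda>e. e \<in> Q j (ts ! i)) (filter (\<lambda>e. v \<in> e) (PL (ts ! i)))"
      using memb_emb i by (intro map_cong) auto
    then show ?thesis unfolding map_cands using memb_ext[OF i] by simp
  qed
  then show "exactly_one (map (\<lambda>e. e \<in> MM ts fl j) (cands ts fl i v))"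
    using loc_ok[OF v assms] by simp
qed

lemma lower_count:
  assumes i: "i < length ts"
  shows "length (filter (\<lambda>e. e \<in> MM ts fl 1 \<union> MM ts fl 2 \<union> MM ts fl 3) (sl ts fl i)) = (if ts ! i then 12 else 6)"
proof -
  have "oe ts fl i \<in> MM ts fl 1" using memb_oe[OF i] by simp
  moreover have "filter (\<lambda>e. emb i e \<in> MM ts fl 1 \<union> MM ts fl 2 \<union> MM ts fl 3) (PL (ts ! i))
     = filter (\<lambda>e. e \<in> Q 1 (ts ! i) \<or> e \<in> Q 2 (ts ! i) \<or> e \<in> Q 3 (ts ! i)) (PL (ts ! i))"
    using memb_emb i by (intro filter_cong) auto
  moreover have "length (filter (\<lambda>e. e \<in> Q 1 t \<or> e \<in> Q 2 t \<or> e \<in> Q 3 t) (PL t)) = (if t then 11 else 5)" for t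
    unfolding Q_def PL_def by (cases t) (simp_all add: doubleton_eq_iff)
  ultimately show ?thesis unfolding count_sl by simp
qed

lemma lower:
  "card (MM ts fl 1 \<union> MM ts fl 2 \<union> MM ts fl 3) = 12 * length (filter id ts) + 6 * length (filter Not ts)"
proof -
  have sub: "MM ts fl 1 \<union> MM ts fl 2 \<union> MM ts fl 3 \<subseteq> ring_edges ts fl" using MM_sub by blast
  have "(\<Sum>i<length ts. length (filter (\<lambda>e. e \<in> MM ts fl 1 \<union> MM ts fl 2 \<union> MM ts fl 3) (sl ts fl i)))
      = (\<Sum>i<length ts. if ts ! i then 12 else 6)"
    by (rule sum.cong) (simp_all only: lower_count lessThan_iff)
  then show ?thesis unfolding card_sub[OF sub] using sum_if by simp
qed



theorem lemma3:
  fixes a b :: nat and ts :: "bool list" and fl :: "nat \<Rightarrow> bool"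
  assumes "a \<ge> 1"
    and "length (filter id ts) = a"
    and "length (filter Not ts) = b"
  shows "m3 (ring_verts ts) (ring_edges ts fl) = (4 * real a + 2 * real b) / (5 * real a + 2 * real b)"
proof -
  let ?S = "{card (M1 \<union> M2 \<union> M3) | M1 M2 M3.
      perfect_matching (ring_verts ts) (ring_edges ts fl) M1 \<and>
      perfect_matching (ring_verts ts) (ring_edges ts fl) M2 \<and>
      perfect_matching (ring_verts ts) (ring_edges ts fl) M3}"
  define N where "N = 12 * a + 6 * b"
  have up: "\<forall>x\<in>?S. x \<le> N"
  proof
    fix x assume "x \<in> ?S"
    then obtain M1 M2 M3 where "x = card (M1 \<union> M2 \<union> M3)"
      "perfect_matching (ring_verts ts) (ring_edges ts fl) M1"
      "perfect_matching (ring_verts ts) (ring_edges ts fl) M2"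
      "perfect_matching (ring_verts ts) (ring_edges ts fl) M3" by blast
    then show "x \<le> N" using upper[of ts fl M1 M2 M3] assms(2,3) unfolding N_def by simp
  qed
  have mem: "N \<in> ?S"
  proof -
    have "perfect_matching (ring_verts ts) (ring_edges ts fl) (MM ts fl j)" if "j \<in> {1,2,3}" for j
      using MM_pm that by blast
    then have "N = card (MM ts fl 1 \<union> MM ts fl 2 \<union> MM ts fl 3) \<and>
      perfect_matching (ring_verts ts) (ring_edges ts fl) (MM ts fl 1) \<and>
      perfect_matching (ring_verts ts) (ring_edges ts fl) (MM ts fl 2) \<and>
      perfect_matching (ring_verts ts) (ring_edges ts fl) (MM ts fl 3)"
      using lower[of ts fl] assms(2,3) unfolding N_def by simp
    then show ?thesis by blast
  qed
  have fin: "finite ?S" using finite_subset[of ?S "{..N}"] up by auto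
  have mx: "Max ?S = N" by (rule Max_eqI[OF fin]) (use up mem in auto)
  have cE: "card (ring_edges ts fl) = 15 * a + 6 * b" using card_E[of ts fl] assms(2,3) by simp
  have "m3 (ring_verts ts) (ring_edges ts fl) = real N / real (15 * a + 6 * b)"
    unfolding m3_def mx cE ..
  also have "\<dots> = (4 * real a + 2 * real b) / (5 * real a + 2 * real b)"
  proof -
    have "real N = 3 * (4 * real a + 2 * real b)" unfolding N_def by simp
    moreover have "real (15 * a + 6 * b) = 3 * (5 * real a + 2 * real b)" by simp
    ultimately have "real N / real (15 * a + 6 * b) = (3 * (4 * real a + 2 * real b)) / (3 * (5 * real a + 2 * real b))"
      by (simp only:)
    also have "\<dots> = (4 * real a + 2 * real b) / (5 * real a + 2 * real b)"
      by (rule mult_divide_mult_cancel_left) simp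
    finally show ?thesis .
  qed
  finally show ?thesis .
qed


end
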